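(* Let $\beta,\delta\in(0,1)$, $K>0$, and let $\eta_1,\eta_2\ge0$ be constants. Consider $$\frac{df}{dt}=\tfrac12 fm\beta L-\delta f-\eta_1 f^{3/2},\qquad \frac{dm}{dt}=\tfrac12 fm\beta L-\delta m+\eta_2 m^{3/2},\qquad L=1-\frac{f+m}{K}.$$ If $\beta K<2\delta-\eta_2\sqrt K$ and $\delta>\eta_2\sqrt K$, then the trivial equilibrium $(0,0)$ is globally asymptotically stable.
   Context: $f,m$ are female and male densities, with populations considered in the region $0\le f,m$, $f+m\le K$. The model uses power-law female harvesting and male stocking. *)

theory Defs
  imports "HOL-Analysis.Analysis"
begin

definition Lfac :: "real \<Rightarrow> real \<Rightarrow> real \<Rightarrow> real" where
  "Lfac K f m = 1 - (f + m) / K"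

definition vfield :: "real \<Rightarrow> real \<Rightarrow> real \<Rightarrow> real \<Rightarrow> real \<Rightarrow> real \<times> real \<Rightarrow> real \<times> real" where
  "vfield \<beta> \<delta> \<eta>1 \<eta>2 K p =
     (let f = fst p; m = snd p in
       (1/2 * f * m * \<beta> * Lfac K f m - \<delta> * f - \<eta>1 * f powr (3/2),
        1/2 * f * m * \<beta> * Lfac K f m - \<delta> * m + \<eta>2 * m powr (3/2)))"

definition region :: "real \<Rightarrow> (real \<times> real) set" where
  "region K = {p. 0 \<le> fst p \<and> 0 \<le> snd p \<and> fst p + snd p \<le> K}"

definition is_solution_in ::
  "((real \<times> real) \<Rightarrow> (real \<times> real)) \<Rightarrow> (real \<times> real) set \<Rightarrow> (real \<Rightarrow> real \<times> real) \<Rightarrow> bool" where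
  "is_solution_in F D x \<longleftrightarrow>
     (\<forall>t\<ge>0. (x has_vector_derivative F (x t)) (at t within {0..})) \<and>
     (\<forall>t\<ge>0. x t \<in> D)"

definition globally_asymptotically_stable ::
  "((real \<times> real) \<Rightarrow> (real \<times> real)) \<Rightarrow> (real \<times> real) set \<Rightarrow> real \<times> real \<Rightarrow> bool" where
  "globally_asymptotically_stable F D p \<longleftrightarrow>
     p \<in> D \<and> F p = 0 \<and>
     (\<forall>\<epsilon>>0. \<exists>r>0. \<forall>x. is_solution_in F D x \<and> dist (x 0) p < r \<longrightarrow>
        (\<forall>t\<ge>0. dist (x t) p < \<epsilon>)) \<and>
     (\<forall>x. is_solution_in F D x \<longrightarrow> (x \<longlongrightarrow> p) at_top)"

end

theory Submission
  imports Defs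
begin

lemma pt_bound:
  fixes \<beta> \<delta> \<eta>1 \<eta>2 K f m :: real
  assumes "0 < \<beta>" "0 < K" "0 \<le> \<eta>1" "0 \<le> \<eta>2"
    and "\<beta> * K < 2 * \<delta> - \<eta>2 * sqrt K" and "\<delta> > \<eta>2 * sqrt K"
    and "0 \<le> f" "0 \<le> m" "f + m \<le> K"
  shows "fst (vfield \<beta> \<delta> \<eta>1 \<eta>2 K (f,m)) + snd (vfield \<beta> \<delta> \<eta>1 \<eta>2 K (f,m))
         \<le> - ((\<delta> - \<eta>2 * sqrt K)/2) * (f + m)"
proof -
  define a where "a = \<eta>2 * sqrt K"
  define b where "b = \<beta> * K"
  define S where "S = f + m"
  define L where "L = Lfac K f m"
  have Vd: "fst (vfield \<beta> \<delta> \<eta>1 \<eta>2 K (f,m)) + snd (vfield \<beta> \<delta> \<eta>1 \<eta>2 K (f,m))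
     = f*m*\<beta>*L - \<delta>* S - \<eta>1 * f powr (3/2) + \<eta>2 * m powr (3/2)"
    by (simp add: vfield_def L_def S_def algebra_simps)
  have h1: "0 \<le> \<eta>1 * f powr (3/2)" using assms by simp
  have mp: "m powr (3/2) = m * sqrt m"
  proof (cases "m = 0")
    case False
    then have "m > 0" using assms by simp
    have "m powr (3/2) = m powr (1 + 1/2)" by simp
    also have "\<dots> = m powr 1 * m powr (1/2)" by (rule powr_add)
    also have "\<dots> = m * sqrt m" using \<open>m>0\<close> by (simp add: powr_half_sqrt)
    finally show ?thesis .
  qed simp
  have "sqrt m \<le> sqrt K" using assms by simp
  then have "m * sqrt m \<le> m * sqrt K" using assms by (simp add: mult_left_mono)
  then have h2: "\<eta>2 * m powr (3/2) \<le> a * m" using assms mp a_def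
    by (metis mult.assoc mult.commute mult_left_mono)
  have sL: "S * L \<le> K/4"
  proof -
    have "S * L = S - S * S/K" using assms by (simp add: L_def Lfac_def S_def field_simps)
    moreover have "S - S * S/K \<le> K/4"
    proof -
      have "0 \<le> (K/2 - S)^2 / K" using assms by simp
      moreover have "(K/2 - S)^2 / K = K/4 - S + S * S/K" using assms
        by (simp add: field_simps power2_eq_square)
      ultimately show ?thesis by linarith
    qed
    ultimately show ?thesis by simp
  qed
  have fm0: "0 \<le> f*m" using assms by simp
  have h3: "f*m*\<beta>*L* S \<le> b/4 * (f*m)"
  proof -
    have "f*m*\<beta>*(S *L) \<le> f*m*\<beta>*(K/4)"
      using sL fm0 assms by (intro mult_left_mono) auto
    then show ?thesis by (simp add: b_def algebra_simps)
  qed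
  have h4: "b/4 * (f*m) \<le> (2*\<delta> - a)/4 * (f*m)"
    using assms fm0 by (intro mult_right_mono) (auto simp: a_def b_def)
  have a0: "0 \<le> a" using assms by (simp add: a_def)
  have al: "a < \<delta>" using assms by (simp add: a_def)
  have iden: "\<delta>* S * S - a*m* S - (2*\<delta>-a)/4*(f*m) - (\<delta>-a)/2* S * S
      = (\<delta>+a)/2*f*f + (\<delta>-a)/2*m*m + (2*\<delta>+a)/4*(f*m)"
    by (simp add: S_def field_simps)
  have "0 \<le> (\<delta>+a)/2*f*f + (\<delta>-a)/2*m*m + (2*\<delta>+a)/4*(f*m)"
    using a0 al assms fm0 by (intro add_nonneg_nonneg mult_nonneg_nonneg) auto
  then have key: "(2*\<delta> - a)/4*(f*m) + a*m* S - \<delta>* S * S \<le> -((\<delta>-a)/2)* S * S"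
    using iden by linarith
  have s0: "0 \<le> S" using assms by (simp add: S_def)
  have "(f*m*\<beta>*L - \<delta>* S - \<eta>1 * f powr (3/2) + \<eta>2 * m powr (3/2)) * S
        \<le> (f*m*\<beta>*L - \<delta>* S + a*m) * S"
    using h1 h2 s0 by (intro mult_right_mono) auto
  also have "\<dots> = f*m*\<beta>*L* S + a*m* S - \<delta>* S * S" by (simp add: algebra_simps)
  also have "\<dots> \<le> -((\<delta>-a)/2)* S * S" using h3 h4 key by linarith
  finally have main: "(f*m*\<beta>*L - \<delta>* S - \<eta>1 * f powr (3/2) + \<eta>2 * m powr (3/2)) * S
        \<le> (-((\<delta>-a)/2)* S)* S" by simp
  show ?thesis
  proof (cases "S = 0")
    case True
    then have "f = 0" "m = 0" using assms S_def by auto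
    then show ?thesis by (simp add: vfield_def)
  next
    case False
    then have "S > 0" using s0 by simp
    with main have "f*m*\<beta>*L - \<delta>* S - \<eta>1 * f powr (3/2) + \<eta>2 * m powr (3/2) \<le> -((\<delta>-a)/2)* S"
      using mult_le_cancel_right_pos by blast
    then show ?thesis using Vd by (simp add: a_def S_def)
  qed
qed


lemma dist0: "dist (p::real\<times>real) (0,0) = norm p"
  by (metis dist_0_norm dist_commute zero_prod_def)

lemma norm_le_V:
  fixes p :: "real \<times> real"
  assumes "0 \<le> fst p" "0 \<le> snd p"
  shows "norm p \<le> fst p + snd p"
proof -
  have "norm p = norm (fst p, snd p)" by simp
  also have "\<dots> \<le> norm (fst p) + norm (snd p)" by (rule norm_Pair_le)
  finally show ?thesis using assms by simp
qed

lemma decay: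
  fixes \<beta> \<delta> \<eta>1 \<eta>2 K :: real
  assumes "0 < \<beta>" "0 < K" "0 \<le> \<eta>1" "0 \<le> \<eta>2"
    and "\<beta> * K < 2 * \<delta> - \<eta>2 * sqrt K" and "\<delta> > \<eta>2 * sqrt K"
    and sol: "is_solution_in (vfield \<beta> \<delta> \<eta>1 \<eta>2 K) (region K) x"
    and t: "0 \<le> t"
  shows "fst (x t) + snd (x t) \<le> exp (- ((\<delta> - \<eta>2 * sqrt K)/2) * t) * (fst (x 0) + snd (x 0))"
proof -
  define c where "c = (\<delta> - \<eta>2 * sqrt K)/2"
  define F where "F = vfield \<beta> \<delta> \<eta>1 \<eta>2 K"
  define V where "V s = fst (x s) + snd (x s)" for s
  define Vd where "Vd s = fst (F (x s)) + snd (F (x s))" for s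
  define W where "W s = exp (c * s) * V s" for s
  define D where "D s = exp (c * s) * c * V s + exp (c * s) * Vd s" for s
  have xd: "\<And>s. 0 \<le> s \<Longrightarrow> (x has_vector_derivative F (x s)) (at s within {0..})"
    and xr: "\<And>s. 0 \<le> s \<Longrightarrow> x s \<in> region K"
    using sol by (auto simp: is_solution_in_def F_def)
  have Vdle: "Vd s \<le> - c * V s" if "0 \<le> s" for s
  proof -
    obtain f m where fm: "x s = (f, m)" by (cases "x s")
    have "f \<ge> 0" "m \<ge> 0" "f + m \<le> K" using xr[OF that] fm by (auto simp: region_def)
    from pt_bound[OF assms(1-6) this] show ?thesis
      by (simp add: Vd_def V_def F_def c_def fm)
  qed
  have dV: "(V has_real_derivative Vd s) (at s within {0..})" if "0 \<le> s" for s
  proof -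
    have d: "(x has_derivative (\<lambda>h. h *\<^sub>R F (x s))) (at s within {0..})"
      using xd[OF that] by (simp add: has_vector_derivative_def)
    have "((\<lambda>s. fst (x s) + snd (x s)) has_derivative
           (\<lambda>h. fst (h *\<^sub>R F (x s)) + snd (h *\<^sub>R F (x s)))) (at s within {0..})"
      by (intro has_derivative_add has_derivative_fst has_derivative_snd d)
    moreover have "(\<lambda>h. fst (h *\<^sub>R F (x s)) + snd (h *\<^sub>R F (x s))) = (\<lambda>h. Vd s * h)"
      by (auto simp: Vd_def algebra_simps)
    ultimately show ?thesis by (simp add: has_field_derivative_def V_def[abs_def])
  qed
  have dW: "(W has_real_derivative D s) (at s within {0..})" if "0 \<le> s" for s
  proof -
    have e: "((\<lambda>s. exp (c * s)) has_real_derivative exp (c * s) * c) (at s within {0..})"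
      by (auto intro!: derivative_eq_intros)
    show ?thesis using DERIV_mult[OF e dV[OF that]]
      by (simp add: W_def[abs_def] D_def mult.commute)
  qed
  have Dle: "D s \<le> 0" if "0 \<le> s" for s
  proof -
    have "D s = exp (c * s) * (c * V s + Vd s)" by (simp add: D_def algebra_simps)
    moreover have "c * V s + Vd s \<le> 0" using Vdle[OF that] by simp
    ultimately show ?thesis by (simp add: mult_nonneg_nonpos)
  qed
  have "\<exists>z\<in>{0..t}. W t - W 0 = (\<lambda>h. D z * h) (t - 0)"
  proof (rule mvt_very_simple[OF t])
    fix z assume "0 \<le> z" "z \<le> t"
    then have "(W has_real_derivative D z) (at z within {0..t})"
      by (intro DERIV_subset[OF dW]) auto
    then show "(W has_derivative (\<lambda>h. D z * h)) (at z within {0..t})"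
      by (simp add: has_field_derivative_def)
  qed
  then obtain z where z: "z \<in> {0..t}" "W t - W 0 = D z * t" by auto
  have "D z * t \<le> 0" using Dle[of z] z(1) t by (simp add: mult_nonpos_nonneg)
  then have "W t \<le> W 0" using z by simp
  then have "exp (c*t) * V t \<le> V 0" by (simp add: W_def)
  then have "exp (-(c*t)) * (exp (c*t) * V t) \<le> exp (-(c*t)) * V 0"
    by (intro mult_left_mono) auto
  then have "V t \<le> exp (-(c*t)) * V 0" by (simp add: exp_minus field_simps)
  then show ?thesis by (simp add: V_def c_def)
qed

theorem mainTheorem13:
  fixes \<beta> \<delta> \<eta>1 \<eta>2 K :: real
  assumes "0 < \<beta>" "\<beta> < 1" "0 < \<delta>" "\<delta> < 1" "0 < K"
    and "0 \<le> \<eta>1" "0 \<le> \<eta>2"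
    and "\<beta> * K < 2 * \<delta> - \<eta>2 * sqrt K"
    and "\<delta> > \<eta>2 * sqrt K"
  shows "globally_asymptotically_stable (vfield \<beta> \<delta> \<eta>1 \<eta>2 K) (region K) (0, 0)"
proof -
  define c where "c = (\<delta> - \<eta>2 * sqrt K)/2"
  have c0: "c > 0" using assms by (simp add: c_def)
  note A = assms(1,5,6,7,8,9)
  have reg: "\<And>x t. is_solution_in (vfield \<beta> \<delta> \<eta>1 \<eta>2 K) (region K) x \<Longrightarrow> 0 \<le> t \<Longrightarrow>
      0 \<le> fst (x t) \<and> 0 \<le> snd (x t)"
    by (auto simp: is_solution_in_def region_def)
  have bound: "norm (x t) \<le> exp (- c * t) * (fst (x 0) + snd (x 0))"
    if "is_solution_in (vfield \<beta> \<delta> \<eta>1 \<eta>2 K) (region K) x" "0 \<le> t" for x t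
  proof -
    have "norm (x t) \<le> fst (x t) + snd (x t)" using norm_le_V[of "x t"] reg[OF that] by blast
    also have "\<dots> \<le> exp (- ((\<delta> - \<eta>2 * sqrt K)/2) * t) * (fst (x 0) + snd (x 0))"
      by (rule decay[OF A that])
    finally show ?thesis unfolding c_def .
  qed
  have p1: "(0, 0) \<in> region K" using assms by (simp add: region_def)
  have p2: "vfield \<beta> \<delta> \<eta>1 \<eta>2 K (0, 0) = 0" by (simp add: vfield_def zero_prod_def)
  have p3: "\<forall>\<epsilon>>0. \<exists>r>0. \<forall>x. is_solution_in (vfield \<beta> \<delta> \<eta>1 \<eta>2 K) (region K) x \<and> dist (x 0) (0,0) < r \<longrightarrow>
        (\<forall>t\<ge>0. dist (x t) (0,0) < \<epsilon>)"
  proof (intro allI impI)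
    fix \<epsilon> :: real assume e: "\<epsilon> > 0"
    show "\<exists>r>0. \<forall>x. is_solution_in (vfield \<beta> \<delta> \<eta>1 \<eta>2 K) (region K) x \<and> dist (x 0) (0,0) < r \<longrightarrow>
        (\<forall>t\<ge>0. dist (x t) (0,0) < \<epsilon>)"
    proof (intro exI[of _ "\<epsilon>/2"] conjI allI impI)
      show "\<epsilon>/2 > 0" using e by simp
      fix x and t :: real assume h: "is_solution_in (vfield \<beta> \<delta> \<eta>1 \<eta>2 K) (region K) x \<and> dist (x 0) (0,0) < \<epsilon>/2"
        and t: "0 \<le> t"
      have sol: "is_solution_in (vfield \<beta> \<delta> \<eta>1 \<eta>2 K) (region K) x" using h by (rule conjunct1)
      have n0: "norm (x 0) < \<epsilon>/2" using conjunct2[OF h] by (simp only: dist0)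
      have nf: "norm (fst (x 0)) \<le> norm (x 0)"
        using norm_fst_le[of "fst (x 0)" "snd (x 0)"] by (simp only: prod.collapse)
      have ns: "norm (snd (x 0)) \<le> norm (x 0)"
        using norm_snd_le[of "snd (x 0)" "fst (x 0)"] by (simp only: prod.collapse)
      have "fst (x 0) \<le> norm (x 0)" "snd (x 0) \<le> norm (x 0)"
        using nf ns abs_ge_self[of "fst (x 0)"] abs_ge_self[of "snd (x 0)"] unfolding real_norm_def
        by linarith+
      then have V0: "fst (x 0) + snd (x 0) < \<epsilon>" using n0 by linarith
      have V0n: "0 \<le> fst (x 0) + snd (x 0)" using reg[OF sol, of 0] by simp
      have "exp (- c * t) \<le> 1" using c0 t by simp
      then have "exp (- c * t) * (fst (x 0) + snd (x 0)) \<le> fst (x 0) + snd (x 0)"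
        using V0n mult_right_mono[of "exp (- c * t)" 1 "fst (x 0) + snd (x 0)"] by simp
      then have "norm (x t) < \<epsilon>" using bound[OF sol t] V0 by linarith
      then show "dist (x t) (0,0) < \<epsilon>" using dist0[of "x t"] by linarith
    qed
  qed
  have p4: "\<forall>x. is_solution_in (vfield \<beta> \<delta> \<eta>1 \<eta>2 K) (region K) x \<longrightarrow> (x \<longlongrightarrow> (0,0)) at_top"
  proof (intro allI impI)
    fix x assume sol: "is_solution_in (vfield \<beta> \<delta> \<eta>1 \<eta>2 K) (region K) x"
    have "filterlim (\<lambda>t::real. -c * t) at_bot at_top"
      by (rule filterlim_tendsto_neg_mult_at_bot[OF tendsto_const _ filterlim_ident]) (use c0 in simp)
    then have lim: "((\<lambda>t. exp (- c * t)) \<longlongrightarrow> 0) at_top"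
      by (rule filterlim_compose[OF exp_at_bot])
    have "((\<lambda>t. exp (- c * t) * (fst (x 0) + snd (x 0))) \<longlongrightarrow> 0) at_top"
      by (rule tendsto_mult_left_zero[OF lim])
    moreover have "eventually (\<lambda>t. norm (x t) \<le> exp (- c * t) * (fst (x 0) + snd (x 0))) at_top"
      by (rule eventually_at_top_linorderI[of 0]) (rule bound[OF sol])
    ultimately have "(x \<longlongrightarrow> 0) at_top" by (rule Lim_null_comparison[rotated])
    then show "(x \<longlongrightarrow> (0,0)) at_top" unfolding zero_prod_def .
  qed
  show ?thesis unfolding globally_asymptotically_stable_def
    using p1 p2 p3 p4 by (intro conjI)
qed

end
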